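(* For every $G^*\in\mathcal{G}^*_{d,c}(n)$, if $\sigma$ is a uniformly random permutation in $S_n$ then \[ \mathbb{E}\left[\lvert\phi(G^{*}_\sigma)\rvert\right] \geq T_c,\qquad T_c=c\cdot\frac{dn}{2}\cdot\frac{d-1}{d+1}.\]
   Context: Fix $0<c<1$, $n,d$ with $dn$ even, and $T_{\max}=\binom d2\frac n3$. $\mathcal{G}^*_{d,c}(n)$ is the set of $d$-regular graphs on nodes $\{1,\dots,n\}$ with at least $c\cdot T_{\max}$ triangles, where at each node the $d$ incident edges carry distinct labels $1,\dots,d$. Configuration ordering: for edges $e=(i_1j_1)$, $f=(i_2j_2)$ with $i_1<j_1$, $i_2<j_2$, $e\prec f$ if $i_1<i_2$, or $i_1=i_2$ and the label of $e$ at $i_1$ is smaller than that of $f$. With $e_1\prec\dots\prec e_{nd/2}$ the edges and $G^*[k]$ the subgraph on $e_1,\dots,e_k$, $\phi(G^* )\in\{0,1\}^{nd/2}$ has $\phi(G^* )(k)=1$ iff $e_k$ lies in a triangle of $G^*[k]$; $\lvert x\rvert=\sum_j x(j)$. $G^*_\sigma$ denotes $G^*$ with node labels permuted by $\sigma\in S_n$ (edge labels kept). *)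

theory Defs
  imports "HOL-Probability.Probability" "HOL-Combinatorics.Permutations"
begin

text \<open>An edge-labelled graph: a set of edges (2-element node sets) together with
  a labelling function; lab i e is the label of edge e at its endpoint i.\<close>
type_synonym lgraph = "nat set set \<times> (nat \<Rightarrow> nat set \<Rightarrow> nat)"

definition edges :: "lgraph \<Rightarrow> nat set set" where "edges G = fst G"
definition elab :: "lgraph \<Rightarrow> nat \<Rightarrow> nat set \<Rightarrow> nat" where "elab G = snd G"

definition T_max :: "nat \<Rightarrow> nat \<Rightarrow> real" where
  "T_max n d = real (d choose 2) * real n / 3"

definition triangles :: "nat \<Rightarrow> lgraph \<Rightarrow> nat set set" where
  "triangles n G = {T. T \<subseteq> {1..n} \<and> card T = 3 \<and>
      (\<forall>u\<in>T. \<forall>v\<in>T. u \<noteq> v \<longrightarrow> {u, v} \<in> edges G)}"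

definition Gstar :: "nat \<Rightarrow> real \<Rightarrow> nat \<Rightarrow> lgraph set" where
  "Gstar d c n = {G.
     edges G \<subseteq> {e. \<exists>u v. e = {u, v} \<and> u \<noteq> v \<and> u \<in> {1..n} \<and> v \<in> {1..n}} \<and>
     (\<forall>i\<in>{1..n}. card {e\<in>edges G. i \<in> e} = d) \<and>
     (\<forall>i\<in>{1..n}. bij_betw (elab G i) {e\<in>edges G. i \<in> e} {1..d}) \<and>
     real (card (triangles n G)) \<ge> c * T_max n d}"

definition cprec :: "lgraph \<Rightarrow> nat set \<Rightarrow> nat set \<Rightarrow> bool" where
  "cprec G e f \<longleftrightarrow> Min e < Min f \<or>
     (Min e = Min f \<and> elab G (Min e) e < elab G (Min f) f)"

definition edge_at :: "lgraph \<Rightarrow> nat \<Rightarrow> nat set" where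
  "edge_at G k = (THE e. e \<in> edges G \<and> card {f\<in>edges G. cprec G f e} = k - 1)"

definition sub_edges :: "lgraph \<Rightarrow> nat \<Rightarrow> nat set set" where
  "sub_edges G k = edge_at G ` {1..k}"

definition in_triangle :: "nat set set \<Rightarrow> nat set \<Rightarrow> bool" where
  "in_triangle S e \<longleftrightarrow> e \<in> S \<and> (\<exists>w. w \<notin> e \<and> (\<forall>v\<in>e. {v, w} \<in> S))"

definition phi :: "lgraph \<Rightarrow> nat \<Rightarrow> nat" where
  "phi G k = (if in_triangle (sub_edges G k) (edge_at G k) then 1 else 0)"

definition phi_norm :: "nat \<Rightarrow> nat \<Rightarrow> lgraph \<Rightarrow> nat" where
  "phi_norm n d G = (\<Sum>k\<in>{1..n * d div 2}. phi G k)"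

text \<open>G*_sigma: node labels permuted by sigma, edge labels kept.\<close>
definition relabel :: "(nat \<Rightarrow> nat) \<Rightarrow> lgraph \<Rightarrow> lgraph" where
  "relabel \<sigma> G = ((\<lambda>e. \<sigma> ` e) ` edges G,
                    \<lambda>j f. elab G (inv \<sigma> j) (inv \<sigma> ` f))"

end

theory Submission
  imports Defs
begin


definition rank :: "lgraph \<Rightarrow> nat set \<Rightarrow> nat" where "rank H e = card {f\<in>edges H. cprec H f e}"

locale wg =
  fixes H :: lgraph
  assumes fin: "finite (edges H)"
    and two: "\<And>f. f \<in> edges H \<Longrightarrow> \<exists>u v. f = {u,v} \<and> u \<noteq> v"
    and injl: "\<And>i. inj_on (elab H i) {f\<in>edges H. i \<in> f}"
begin

lemma Min_in: "f \<in> edges H \<Longrightarrow> Min f \<in> f"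
  using two[of f] by auto

lemma irr: "\<not> cprec H e e" by (auto simp: cprec_def)
lemma trans': "cprec H e f \<Longrightarrow> cprec H f g \<Longrightarrow> cprec H e g" by (auto simp: cprec_def)
lemma total: "e \<in> edges H \<Longrightarrow> f \<in> edges H \<Longrightarrow> e \<noteq> f \<Longrightarrow> cprec H e f \<or> cprec H f e"
proof -
  assume a: "e \<in> edges H" "f \<in> edges H" "e \<noteq> f"
  show ?thesis
  proof (cases "Min e = Min f")
    case True
    have "elab H (Min e) e \<noteq> elab H (Min e) f"
      using injl[of "Min e"] a Min_in[of e] Min_in[of f] True unfolding inj_on_def by auto
    then show ?thesis using True by (auto simp: cprec_def)
  next
    case False then show ?thesis by (auto simp: cprec_def)
  qed
qed

lemma rank_less: "e \<in> edges H \<Longrightarrow> f \<in> edges H \<Longrightarrow> cprec H e f \<Longrightarrow> rank H e < rank H f"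
proof -
  assume a: "e \<in> edges H" "f \<in> edges H" "cprec H e f"
  have "{g\<in>edges H. cprec H g e} \<subseteq> {g\<in>edges H. cprec H g f}" using trans' a(3) by blast
  moreover have "e \<in> {g\<in>edges H. cprec H g f}" "e \<notin> {g\<in>edges H. cprec H g e}" using a irr by auto
  ultimately have "{g\<in>edges H. cprec H g e} \<subset> {g\<in>edges H. cprec H g f}" by blast
  thus ?thesis unfolding rank_def by (rule psubset_card_mono[rotated]) (use fin in simp)
qed

lemma rank_lt: "e \<in> edges H \<Longrightarrow> rank H e < card (edges H)"
proof -
  assume a: "e \<in> edges H"
  have "{g\<in>edges H. cprec H g e} \<subset> edges H" using a irr by blast
  thus ?thesis unfolding rank_def by (rule psubset_card_mono[OF fin])
qed

lemma rank_inj: "inj_on (rank H) (edges H)"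
proof
  fix e f assume a: "e \<in> edges H" "f \<in> edges H" "rank H e = rank H f"
  show "e = f"
  proof (rule ccontr)
    assume "e \<noteq> f"
    then have "cprec H e f \<or> cprec H f e" using total a by blast
    thus False using rank_less a by fastforce
  qed
qed

lemma rank_bij: "bij_betw (rank H) (edges H) {0..<card (edges H)}"
proof -
  have "rank H ` edges H \<subseteq> {0..<card (edges H)}" using rank_lt by auto
  moreover have "card (rank H ` edges H) = card {0..<card (edges H)}"
    using card_image[OF rank_inj] by simp
  ultimately have "rank H ` edges H = {0..<card (edges H)}"
    by (simp add: card_subset_eq)
  thus ?thesis using rank_inj by (simp add: bij_betw_def)
qed

lemma edge_at_eq: "e \<in> edges H \<Longrightarrow> edge_at H (Suc (rank H e)) = e"
  unfolding edge_at_def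
  apply (rule the_equality)
  using rank_inj unfolding rank_def[symmetric] inj_on_def by auto

lemma edge_at_bij: "bij_betw (edge_at H) {1..card (edges H)} (edges H)"
proof -
  have "bij_betw (\<lambda>e. Suc (rank H e)) (edges H) {1..card (edges H)}"
  proof -
    have "bij_betw Suc {0..<card (edges H)} {1..card (edges H)}"
      by (simp add: bij_betw_def atLeastLessThanSuc_atLeastAtMost[symmetric] image_Suc_atLeastLessThan)
    from bij_betw_trans[OF rank_bij this] show ?thesis by (simp add: o_def)
  qed
  hence "bij_betw (inv_into (edges H) (\<lambda>e. Suc (rank H e))) {1..card (edges H)} (edges H)"
    by (rule bij_betw_inv_into)
  moreover have "\<And>k. k \<in> {1..card (edges H)} \<Longrightarrow> inv_into (edges H) (\<lambda>e. Suc (rank H e)) k = edge_at H k"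
  proof -
    fix k assume k: "k \<in> {1..card (edges H)}"
    let ?e = "inv_into (edges H) (\<lambda>e. Suc (rank H e)) k"
    have kin: "k \<in> (\<lambda>e. Suc (rank H e)) ` edges H"
      using \<open>bij_betw (\<lambda>e. Suc (rank H e)) _ _\<close> k by (simp add: bij_betw_def)
    have "?e \<in> edges H" using kin by (rule inv_into_into)
    moreover have "Suc (rank H ?e) = k" using f_inv_into_f[OF kin] .
    ultimately show "?e = edge_at H k" using edge_at_eq by metis
  qed
  ultimately show ?thesis using bij_betw_cong by blast
qed

lemma sub_edges_eq: "e \<in> edges H \<Longrightarrow> sub_edges H (Suc (rank H e)) = {f\<in>edges H. f = e \<or> cprec H f e}"
proof -
  assume e: "e \<in> edges H"
  have "sub_edges H (Suc (rank H e)) = edge_at H ` {1..Suc (rank H e)}" by (simp add: sub_edges_def)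
  also have "\<dots> = {f\<in>edges H. Suc (rank H f) \<le> Suc (rank H e)}"
  proof
    show "edge_at H ` {1..Suc (rank H e)} \<subseteq> {f \<in> edges H. Suc (rank H f) \<le> Suc (rank H e)}"
    proof
      fix f assume "f \<in> edge_at H ` {1..Suc (rank H e)}"
      then obtain k where k: "k \<in> {1..Suc (rank H e)}" "f = edge_at H k" by auto
      have kk: "k \<in> {1..card (edges H)}" using k rank_lt[OF e] by auto
      have fe: "f \<in> edges H" using edge_at_bij kk k by (auto simp: bij_betw_def)
      have "edge_at H (Suc (rank H f)) = edge_at H k" using edge_at_eq[OF fe] k by simp
      moreover have "Suc (rank H f) \<in> {1..card (edges H)}" using rank_lt[OF fe] by auto
      ultimately have "Suc (rank H f) = k" using edge_at_bij kk
        unfolding bij_betw_def inj_on_def by blast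
      thus "f \<in> {f \<in> edges H. Suc (rank H f) \<le> Suc (rank H e)}" using k fe by auto
    qed
  next
    show "{f \<in> edges H. Suc (rank H f) \<le> Suc (rank H e)} \<subseteq> edge_at H ` {1..Suc (rank H e)}"
    proof
      fix f assume "f \<in> {f \<in> edges H. Suc (rank H f) \<le> Suc (rank H e)}"
      hence "f \<in> edges H" "Suc (rank H f) \<in> {1..Suc (rank H e)}" by auto
      thus "f \<in> edge_at H ` {1..Suc (rank H e)}" using edge_at_eq by (metis image_eqI)
    qed
  qed
  also have "\<dots> = {f\<in>edges H. f = e \<or> cprec H f e}"
  proof (intro Collect_cong conj_cong refl)
    fix f assume f: "f \<in> edges H"
    show "(Suc (rank H f) \<le> Suc (rank H e)) = (f = e \<or> cprec H f e)"
    proof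
      assume "Suc (rank H f) \<le> Suc (rank H e)"
      hence "\<not> cprec H e f" using rank_less[OF e f] by linarith
      thus "f = e \<or> cprec H f e" using total[OF e f] by blast
    next
      assume "f = e \<or> cprec H f e"
      thus "Suc (rank H f) \<le> Suc (rank H e)" using rank_less[OF f e] by fastforce
    qed
  qed
  finally show ?thesis .
qed


lemma suc_rank_bij: "bij_betw (\<lambda>e. Suc (rank H e)) (edges H) {1..card (edges H)}"
proof -
  have "bij_betw Suc {0..<card (edges H)} {1..card (edges H)}"
    by (simp add: bij_betw_def atLeastLessThanSuc_atLeastAtMost[symmetric] image_Suc_atLeastLessThan)
  from bij_betw_trans[OF rank_bij this] show ?thesis by (simp add: o_def)
qed

lemma phi_sum: "(\<Sum>k\<in>{1..card (edges H)}. phi H k) =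
   card {e\<in>edges H. in_triangle {f\<in>edges H. f = e \<or> cprec H f e} e}"
proof -
  have "(\<Sum>k\<in>{1..card (edges H)}. phi H k) = (\<Sum>e\<in>edges H. phi H (Suc (rank H e)))"
    using sum.reindex_bij_betw[OF suc_rank_bij, of "phi H"] by simp
  also have "\<dots> = (\<Sum>e\<in>edges H. if in_triangle {f\<in>edges H. f = e \<or> cprec H f e} e then 1 else 0)"
    by (rule sum.cong) (simp_all add: phi_def sub_edges_eq edge_at_eq)
  also have "\<dots> = card {e\<in>edges H. in_triangle {f\<in>edges H. f = e \<or> cprec H f e} e}"
    using sum.inter_filter[OF fin, of "\<lambda>_. (1::nat)"] by simp
  finally show ?thesis .
qed

lemma tri_char_aux:
  assumes e: "e \<in> edges H" and uv: "e = {u,v}" "u < v"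
  shows "in_triangle {f\<in>edges H. f = e \<or> cprec H f e} e \<longleftrightarrow> (\<exists>w. \<forall>x\<in>e. {x,w} \<in> edges H \<and> w < x)"
proof
  have Me: "Min e = u" using uv by auto
  assume "in_triangle {f\<in>edges H. f = e \<or> cprec H f e} e"
  then obtain w where w: "w \<notin> e" "\<forall>x\<in>e. {x, w} \<in> {f\<in>edges H. f = e \<or> cprec H f e}"
    unfolding in_triangle_def by blast
  have "{v,w} \<in> {f\<in>edges H. f = e \<or> cprec H f e}" using w uv by auto
  moreover have "{v,w} \<noteq> e" using w uv by auto
  ultimately have c: "cprec H {v,w} e" by auto
  have "w < u"
  proof (rule ccontr)
    assume "\<not> w < u"
    hence "u < w" using w uv by auto
    hence "Min {v,w} > u" using uv by auto
    thus False using c Me unfolding cprec_def by auto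
  qed
  thus "\<exists>w. \<forall>x\<in>e. {x,w} \<in> edges H \<and> w < x" using w uv by auto
next
  have Me: "Min e = u" using uv by auto
  assume "\<exists>w. \<forall>x\<in>e. {x,w} \<in> edges H \<and> w < x"
  then obtain w where w: "\<forall>x\<in>e. {x,w} \<in> edges H \<and> w < x" by blast
  have "w \<notin> e" using w by auto
  moreover have "\<forall>x\<in>e. cprec H {x,w} e"
  proof
    fix x assume "x \<in> e"
    hence "Min {x,w} = w" "w < u" using w uv by auto
    thus "cprec H {x,w} e" using Me unfolding cprec_def by auto
  qed
  ultimately show "in_triangle {f\<in>edges H. f = e \<or> cprec H f e} e"
    unfolding in_triangle_def using e w by auto
qed

lemma tri_char:
  assumes e: "e \<in> edges H"
  shows "in_triangle {f\<in>edges H. f = e \<or> cprec H f e} e \<longleftrightarrow> (\<exists>w. \<forall>x\<in>e. {x,w} \<in> edges H \<and> w < x)"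
proof -
  obtain u v where "e = {u,v}" "u \<noteq> v" using two[OF e] by blast
  then consider "e = {u,v}" "u < v" | "e = {v,u}" "v < u" by (metis insert_commute linorder_neqE_nat)
  thus ?thesis proof cases case 1 thus ?thesis using tri_char_aux[OF e] by blast next case 2 thus ?thesis using tri_char_aux[OF e] by blast qed
qed

lemma phi_sum': "(\<Sum>k\<in>{1..card (edges H)}. phi H k) =
   card {e\<in>edges H. \<exists>w. \<forall>x\<in>e. {x,w} \<in> edges H \<and> w < x}"
  unfolding phi_sum by (rule arg_cong[where f=card]) (use tri_char in blast)

end


lemma finP: "finite {\<sigma>. \<sigma> permutes {1..(n::nat)}}"
  by (rule finite_permutations) simp

lemma argm_le:
  fixes n x y :: nat
  assumes S: "S \<subseteq> {1..n}" and x: "x \<in> S" and y: "y \<in> S"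
  shows "card {\<sigma>. \<sigma> permutes {1..n} \<and> (\<forall>z\<in>S. z \<noteq> y \<longrightarrow> \<sigma> y < \<sigma> z)}
       \<le> card {\<sigma>. \<sigma> permutes {1..n} \<and> (\<forall>z\<in>S. z \<noteq> x \<longrightarrow> \<sigma> x < \<sigma> z)}"
proof (rule card_inj_on_le[where f = "\<lambda>\<sigma>. \<sigma> \<circ> Transposition.transpose x y"])
  show "inj_on (\<lambda>\<sigma>. \<sigma> \<circ> Transposition.transpose x y) {\<sigma>. \<sigma> permutes {1..n} \<and> (\<forall>z\<in>S. z \<noteq> y \<longrightarrow> \<sigma> y < \<sigma> z)}"
  proof (rule inj_onI)
    fix a b assume "a \<circ> Transposition.transpose x y = b \<circ> Transposition.transpose x y"
    hence "a \<circ> Transposition.transpose x y \<circ> Transposition.transpose x y = b \<circ> Transposition.transpose x y \<circ> Transposition.transpose x y" by simp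
    thus "a = b" by (simp add: o_assoc[symmetric])
  qed
  show "(\<lambda>\<sigma>. \<sigma> \<circ> Transposition.transpose x y) ` {\<sigma>. \<sigma> permutes {1..n} \<and> (\<forall>z\<in>S. z \<noteq> y \<longrightarrow> \<sigma> y < \<sigma> z)}
    \<subseteq> {\<sigma>. \<sigma> permutes {1..n} \<and> (\<forall>z\<in>S. z \<noteq> x \<longrightarrow> \<sigma> x < \<sigma> z)}"
  proof
    fix \<tau> assume "\<tau> \<in> (\<lambda>\<sigma>. \<sigma> \<circ> Transposition.transpose x y) ` {\<sigma>. \<sigma> permutes {1..n} \<and> (\<forall>z\<in>S. z \<noteq> y \<longrightarrow> \<sigma> y < \<sigma> z)}"
    then obtain \<sigma> where s: "\<sigma> permutes {1..n}" "\<forall>z\<in>S. z \<noteq> y \<longrightarrow> \<sigma> y < \<sigma> z"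
      and t: "\<tau> = \<sigma> \<circ> Transposition.transpose x y" by blast
    have "\<tau> permutes {1..n}" unfolding t
      by (rule permutes_compose[OF permutes_swap_id s(1)]) (use S x y in auto)
    moreover have "\<forall>z\<in>S. z \<noteq> x \<longrightarrow> \<tau> x < \<tau> z"
    proof (intro ballI impI)
      fix z assume z: "z \<in> S" "z \<noteq> x"
      show "\<tau> x < \<tau> z"
      proof (cases "z = y")
        case True
        have "\<sigma> y < \<sigma> x" using s(2) x True z by metis
        thus ?thesis by (simp add: t True)
      next
        case False
        have "\<sigma> y < \<sigma> z" using s(2) z False by blast
        thus ?thesis using False z by (simp add: t)
      qed
    qed
    ultimately show "\<tau> \<in> {\<sigma>. \<sigma> permutes {1..n} \<and> (\<forall>z\<in>S. z \<noteq> x \<longrightarrow> \<sigma> x < \<sigma> z)}" by blast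
  qed
  show "finite {\<sigma>. \<sigma> permutes {1..n} \<and> (\<forall>z\<in>S. z \<noteq> x \<longrightarrow> \<sigma> x < \<sigma> z)}"
    using finP[of n] by (rule finite_subset[rotated]) auto
qed

lemma argm_card:
  fixes n x :: nat
  assumes S: "S \<subseteq> {1..n}" and x: "x \<in> S"
  shows "card {\<sigma>. \<sigma> permutes {1..n} \<and> (\<forall>z\<in>S. z \<noteq> x \<longrightarrow> \<sigma> x < \<sigma> z)} * card S
       = card {\<sigma>. \<sigma> permutes {1..n}}"
proof -
  define A where "A y = {\<sigma>. \<sigma> permutes {1..n} \<and> (\<forall>z\<in>S. z \<noteq> y \<longrightarrow> \<sigma> y < \<sigma> z)}" for y
  have finS: "finite S" using S finite_subset by blast
  have eq: "card (A y) = card (A x)" if "y \<in> S" for y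
    using argm_le[OF S x that] argm_le[OF S that x] unfolding A_def by linarith
  have finA: "finite (A y)" for y using finP[of n] by (rule finite_subset[rotated]) (auto simp: A_def)
  have "(\<Union>y\<in>S. A y) = {\<sigma>. \<sigma> permutes {1..n}}"
  proof
    show "(\<Union>y\<in>S. A y) \<subseteq> {\<sigma>. \<sigma> permutes {1..n}}" by (auto simp: A_def)
    show "{\<sigma>. \<sigma> permutes {1..n}} \<subseteq> (\<Union>y\<in>S. A y)"
    proof
      fix \<sigma> assume s: "\<sigma> \<in> {\<sigma>. \<sigma> permutes {1..n}}"
      have "Min (\<sigma> ` S) \<in> \<sigma> ` S" using finS x by (intro Min_in) auto
      then obtain y where y: "y \<in> S" "\<sigma> y = Min (\<sigma> ` S)" by auto
      have inj: "inj \<sigma>" using s permutes_inj by blast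
      have "\<forall>z\<in>S. z \<noteq> y \<longrightarrow> \<sigma> y < \<sigma> z"
      proof (intro ballI impI)
        fix z assume z: "z \<in> S" "z \<noteq> y"
        have "\<sigma> y \<le> \<sigma> z" unfolding y(2) using z finS by (intro Min_le) auto
        moreover have "\<sigma> y \<noteq> \<sigma> z" using inj z by (metis injD)
        ultimately show "\<sigma> y < \<sigma> z" by simp
      qed
      hence "\<sigma> \<in> A y" using s unfolding A_def by blast
      thus "\<sigma> \<in> (\<Union>y\<in>S. A y)" using y(1) by blast
    qed
  qed
  moreover have "card (\<Union>y\<in>S. A y) = (\<Sum>y\<in>S. card (A y))"
  proof (rule card_UN_disjoint[OF finS])
    show "\<forall>i\<in>S. finite (A i)" using finA by blast
    show "\<forall>i\<in>S. \<forall>j\<in>S. i \<noteq> j \<longrightarrow> A i \<inter> A j = {}"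
    proof (intro ballI impI)
      fix i j assume ij: "i \<in> S" "j \<in> S" "i \<noteq> j"
      show "A i \<inter> A j = {}"
      proof (rule ccontr)
        assume "A i \<inter> A j \<noteq> {}"
        then obtain \<sigma> where "\<sigma> \<in> A i" "\<sigma> \<in> A j" by blast
        hence a1: "\<forall>z\<in>S. z \<noteq> i \<longrightarrow> \<sigma> i < \<sigma> z" and a2: "\<forall>z\<in>S. z \<noteq> j \<longrightarrow> \<sigma> j < \<sigma> z"
          unfolding A_def by simp_all
        have "\<sigma> i < \<sigma> j" using a1 ij(2) ij(3)[symmetric] by blast
        moreover have "\<sigma> j < \<sigma> i" using a2 ij(1) ij(3) by blast
        ultimately show False by simp
      qed
    qed
  qed
  moreover have "(\<Sum>y\<in>S. card (A y)) = (\<Sum>y\<in>S. card (A x))"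
    by (rule sum.cong) (simp_all add: eq)
  hence "(\<Sum>y\<in>S. card (A y)) = card S * card (A x)" by simp
  ultimately show ?thesis unfolding A_def by (simp add: mult.commute)
qed

lemma sum_swap_card:
  assumes "finite A" "finite B"
  shows "(\<Sum>a\<in>A. card {b\<in>B. Q a b}) = (\<Sum>b\<in>B. card {a\<in>A. Q a b})"
proof -
  have "(\<Sum>a\<in>A. card {b\<in>B. Q a b}) = (\<Sum>a\<in>A. \<Sum>b\<in>B. if Q a b then 1 else 0)"
    using assms by (simp add: sum.inter_filter[symmetric])
  also have "\<dots> = (\<Sum>b\<in>B. \<Sum>a\<in>A. if Q a b then 1 else 0)" by (rule sum.swap)
  also have "\<dots> = (\<Sum>b\<in>B. card {a\<in>A. Q a b})"
    using assms by (simp add: sum.inter_filter[symmetric])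
  finally show ?thesis .
qed



locale gs =
  fixes n d :: nat and c :: real and G :: lgraph
  assumes G: "G \<in> Gstar d c n"
begin

abbreviation "E \<equiv> edges G"

lemma Eedge: "f \<in> E \<Longrightarrow> \<exists>u v. f = {u,v} \<and> u \<noteq> v \<and> u \<in> {1..n} \<and> v \<in> {1..n}"
  using G unfolding Gstar_def by blast

lemma E_sub: "E \<subseteq> Pow {1..n}" using Eedge by blast

lemma finE: "finite E" using E_sub finite_subset by (metis finite_Pow_iff finite_atLeastAtMost)

lemma deg: "i \<in> {1..n} \<Longrightarrow> card {e\<in>E. i \<in> e} = d"
  using G unfolding Gstar_def by blast

lemma lab: "i \<in> {1..n} \<Longrightarrow> bij_betw (elab G i) {e\<in>E. i \<in> e} {1..d}"
  using G unfolding Gstar_def by blast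

lemma tri_ge: "real (card (triangles n G)) \<ge> c * T_max n d"
  using G unfolding Gstar_def by blast

lemma card2: "f \<in> E \<Longrightarrow> card f = 2"
  using Eedge by fastforce

lemma cardE: "2 * card E = n * d"
proof -
  have "(\<Sum>i\<in>{1..n}. card {e\<in>E. i \<in> e}) = (\<Sum>e\<in>E. card {i\<in>{1..n}. i \<in> e})"
    by (rule sum_swap_card) (simp_all add: finE)
  also have "\<dots> = (\<Sum>e\<in>E. 2)"
  proof (rule sum.cong[OF refl])
    fix e assume e: "e \<in> E"
    have "{i\<in>{1..n}. i \<in> e} = e" using E_sub e by blast
    thus "card {i\<in>{1..n}. i \<in> e} = 2" using card2[OF e] by simp
  qed
  finally have "(\<Sum>i\<in>{1..n}. card {e\<in>E. i \<in> e}) = 2 * card E" by simp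
  moreover have "(\<Sum>i\<in>{1..n}. card {e\<in>E. i \<in> e}) = n * d" using deg by simp
  ultimately show ?thesis by simp
qed

context
  fixes \<sigma> assumes \<sigma>: "\<sigma> permutes {1..n}"
begin

lemma inj\<sigma>: "inj \<sigma>" using \<sigma> permutes_inj by blast

lemma injimg: "inj (image \<sigma>)" using inj\<sigma> by (simp add: inj_def inj_image_eq_iff)

lemma redges: "edges (relabel \<sigma> G) = image \<sigma> ` E"
  by (simp add: relabel_def edges_def)

lemma relab: "elab (relabel \<sigma> G) j f = elab G (inv \<sigma> j) (inv \<sigma> ` f)"
  by (simp add: relabel_def elab_def)

lemma wgR: "wg (relabel \<sigma> G)"
proof
  show "finite (edges (relabel \<sigma> G))" using finE by (simp add: redges)
next
  fix f assume "f \<in> edges (relabel \<sigma> G)"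
  then obtain e where e: "e \<in> E" "f = \<sigma> ` e" by (auto simp: redges)
  then obtain u v where "e = {u,v}" "u \<noteq> v" using Eedge by blast
  thus "\<exists>u v. f = {u, v} \<and> u \<noteq> v" using e inj\<sigma> by (auto dest: injD)
next
  fix i
  show "inj_on (elab (relabel \<sigma> G) i) {f \<in> edges (relabel \<sigma> G). i \<in> f}"
  proof (rule inj_onI)
    fix f f' assume f: "f \<in> {f \<in> edges (relabel \<sigma> G). i \<in> f}" and f': "f' \<in> {f \<in> edges (relabel \<sigma> G). i \<in> f}"
      and eq: "elab (relabel \<sigma> G) i f = elab (relabel \<sigma> G) i f'"
    obtain e where e: "e \<in> E" "f = \<sigma> ` e" using f by (auto simp: redges)
    obtain e' where e': "e' \<in> E" "f' = \<sigma> ` e'" using f' by (auto simp: redges)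
    have ie: "inv \<sigma> i \<in> e" using f e inv_f_f[OF inj\<sigma>] by auto
    have ie': "inv \<sigma> i \<in> e'" using f' e' inv_f_f[OF inj\<sigma>] by auto
    have ii: "inv \<sigma> i \<in> {1..n}" using ie e E_sub by blast
    have "elab G (inv \<sigma> i) e = elab G (inv \<sigma> i) e'"
      using eq unfolding relab e(2) e'(2) image_inv_f_f[OF inj\<sigma>] .
    hence "e = e'" using lab[OF ii] ie ie' e e' unfolding bij_betw_def inj_on_def by blast
    thus "f = f'" using e e' by simp
  qed
qed

lemma cardR: "card (edges (relabel \<sigma> G)) = card E"
  unfolding redges by (rule card_image[OF inj_on_subset[OF injimg subset_UNIV]])

lemma Q_eq: "e \<in> E \<Longrightarrow> (\<exists>w. \<forall>x\<in>\<sigma> ` e. {x,w} \<in> image \<sigma> ` E \<and> w < x) \<longleftrightarrow>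
   (\<exists>w. \<forall>x\<in>e. {x,w} \<in> E \<and> \<sigma> w < \<sigma> x)"
proof
  have key: "{\<sigma> x, \<sigma> w} \<in> image \<sigma> ` E \<longleftrightarrow> {x,w} \<in> E" for x w
  proof -
    have "{\<sigma> x, \<sigma> w} = \<sigma> ` {x,w}" by simp
    thus ?thesis using inj_image_mem_iff[OF injimg, of "{x,w}" E] by simp
  qed
  assume "\<exists>w. \<forall>x\<in>\<sigma> ` e. {x,w} \<in> image \<sigma> ` E \<and> w < x"
  then obtain w where w: "\<forall>x\<in>\<sigma> ` e. {x,w} \<in> image \<sigma> ` E \<and> w < x" by blast
  have sw: "\<sigma> (inv \<sigma> w) = w" using \<sigma> permutes_inverses(1) by metis
  have "\<forall>x\<in>e. {x, inv \<sigma> w} \<in> E \<and> \<sigma> (inv \<sigma> w) < \<sigma> x"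
  proof
    fix x assume "x \<in> e"
    hence "{\<sigma> x, \<sigma> (inv \<sigma> w)} \<in> image \<sigma> ` E \<and> \<sigma> (inv \<sigma> w) < \<sigma> x" using w sw by auto
    thus "{x, inv \<sigma> w} \<in> E \<and> \<sigma> (inv \<sigma> w) < \<sigma> x" using key by blast
  qed
  thus "\<exists>w. \<forall>x\<in>e. {x,w} \<in> E \<and> \<sigma> w < \<sigma> x" by blast
next
  have key: "{\<sigma> x, \<sigma> w} \<in> image \<sigma> ` E \<longleftrightarrow> {x,w} \<in> E" for x w
  proof -
    have "{\<sigma> x, \<sigma> w} = \<sigma> ` {x,w}" by simp
    thus ?thesis using inj_image_mem_iff[OF injimg, of "{x,w}" E] by simp
  qed
  assume "\<exists>w. \<forall>x\<in>e. {x,w} \<in> E \<and> \<sigma> w < \<sigma> x"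
  then obtain w where w: "\<forall>x\<in>e. {x,w} \<in> E \<and> \<sigma> w < \<sigma> x" by blast
  have "\<forall>x\<in>\<sigma> ` e. {x,\<sigma> w} \<in> image \<sigma> ` E \<and> \<sigma> w < x" using w key by auto
  thus "\<exists>w. \<forall>x\<in>\<sigma> ` e. {x,w} \<in> image \<sigma> ` E \<and> w < x" by blast
qed

lemma phi_norm_eq: "phi_norm n d (relabel \<sigma> G) = card {e\<in>E. \<exists>w. \<forall>x\<in>e. {x,w} \<in> E \<and> \<sigma> w < \<sigma> x}"
proof -
  interpret R: wg "relabel \<sigma> G" by (rule wgR)
  have "n * d div 2 = card (edges (relabel \<sigma> G))" using cardR cardE by simp
  hence "phi_norm n d (relabel \<sigma> G) = card {e'\<in>image \<sigma> ` E. \<exists>w. \<forall>x\<in>e'. {x,w} \<in> image \<sigma> ` E \<and> w < x}"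
    unfolding phi_norm_def using R.phi_sum' by (simp add: redges)
  also have "{e'\<in>image \<sigma> ` E. \<exists>w. \<forall>x\<in>e'. {x,w} \<in> image \<sigma> ` E \<and> w < x}
     = image \<sigma> ` {e\<in>E. \<exists>w. \<forall>x\<in>e. {x,w} \<in> E \<and> \<sigma> w < \<sigma> x}"
  proof
    show "{e'\<in>image \<sigma> ` E. \<exists>w. \<forall>x\<in>e'. {x,w} \<in> image \<sigma> ` E \<and> w < x}
     \<subseteq> image \<sigma> ` {e\<in>E. \<exists>w. \<forall>x\<in>e. {x,w} \<in> E \<and> \<sigma> w < \<sigma> x}"
    proof
      fix e' assume "e' \<in> {e'\<in>image \<sigma> ` E. \<exists>w. \<forall>x\<in>e'. {x,w} \<in> image \<sigma> ` E \<and> w < x}"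
      then obtain e where e: "e \<in> E" "e' = \<sigma> ` e" "\<exists>w. \<forall>x\<in>\<sigma> ` e. {x,w} \<in> image \<sigma> ` E \<and> w < x"
        by blast
      hence "e \<in> {e\<in>E. \<exists>w. \<forall>x\<in>e. {x,w} \<in> E \<and> \<sigma> w < \<sigma> x}" using Q_eq[OF e(1)] by blast
      thus "e' \<in> image \<sigma> ` {e\<in>E. \<exists>w. \<forall>x\<in>e. {x,w} \<in> E \<and> \<sigma> w < \<sigma> x}" using e(2) by blast
    qed
    show "image \<sigma> ` {e\<in>E. \<exists>w. \<forall>x\<in>e. {x,w} \<in> E \<and> \<sigma> w < \<sigma> x}
      \<subseteq> {e'\<in>image \<sigma> ` E. \<exists>w. \<forall>x\<in>e'. {x,w} \<in> image \<sigma> ` E \<and> w < x}"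
    proof
      fix e' assume "e' \<in> image \<sigma> ` {e\<in>E. \<exists>w. \<forall>x\<in>e. {x,w} \<in> E \<and> \<sigma> w < \<sigma> x}"
      then obtain e where e: "e \<in> E" "e' = \<sigma> ` e" "\<exists>w. \<forall>x\<in>e. {x,w} \<in> E \<and> \<sigma> w < \<sigma> x"
        by blast
      thus "e' \<in> {e'\<in>image \<sigma> ` E. \<exists>w. \<forall>x\<in>e'. {x,w} \<in> image \<sigma> ` E \<and> w < x}"
        using Q_eq[OF e(1)] by blast
    qed
  qed
  also have "card \<dots> = card {e\<in>E. \<exists>w. \<forall>x\<in>e. {x,w} \<in> E \<and> \<sigma> w < \<sigma> x}"
    by (rule card_image[OF inj_on_subset[OF injimg subset_UNIV]])
  finally show ?thesis .
qed

end

end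


context gs begin

definition N :: "nat set \<Rightarrow> nat set" where "N e = {w. \<forall>x\<in>e. {x,w} \<in> E}"

lemma Eel: "e \<in> E \<Longrightarrow> x \<in> e \<Longrightarrow> x \<in> {1..n}" using E_sub by blast

lemma notsing: "{w} \<notin> E" using card2 by fastforce

lemma N_sub: "e \<in> E \<Longrightarrow> N e \<subseteq> {1..n}"
proof
  fix w assume e: "e \<in> E" and w: "w \<in> N e"
  obtain x where x: "x \<in> e" using card2[OF e] by fastforce
  have "{x,w} \<in> E" using w x unfolding N_def by blast
  thus "w \<in> {1..n}" using Eel by blast
qed

lemma N_disj: "w \<in> N e \<Longrightarrow> w \<notin> e"
  using notsing unfolding N_def by force

lemma finN: "e \<in> E \<Longrightarrow> finite (N e)" using N_sub finite_subset by blast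

lemma Ncard: assumes e: "e \<in> E" shows "card (N e) + 1 \<le> d"
proof -
  obtain u v where uv: "e = {u,v}" "u \<noteq> v" "u \<in> {1..n}" "v \<in> {1..n}" using Eedge[OF e] by blast
  have vN: "v \<notin> N e" using N_disj uv by blast
  have "card (insert v (N e)) \<le> card {f\<in>E. u \<in> f}"
  proof (rule card_inj_on_le[where f = "\<lambda>w. {u,w}"])
    show "inj_on (\<lambda>w. {u, w}) (insert v (N e))"
    proof (rule inj_onI)
      fix w w' assume w: "w \<in> insert v (N e)" and w': "w' \<in> insert v (N e)" and eq: "{u,w} = {u,w'}"
      have "w \<noteq> u" using w N_disj uv by blast
      moreover have "w' \<noteq> u" using w' N_disj uv by blast
      ultimately show "w = w'" using eq by (metis doubleton_eq_iff)
    qed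
    show "(\<lambda>w. {u, w}) ` insert v (N e) \<subseteq> {f \<in> E. u \<in> f}"
    proof
      fix f assume "f \<in> (\<lambda>w. {u, w}) ` insert v (N e)"
      then obtain w where w: "w \<in> insert v (N e)" "f = {u,w}" by blast
      have "{u,w} \<in> E"
      proof (cases "w = v")
        case True thus ?thesis using e uv by simp
      next
        case False hence "w \<in> N e" using w by blast
        thus ?thesis unfolding N_def using uv by blast
      qed
      thus "f \<in> {f \<in> E. u \<in> f}" using w by blast
    qed
    show "finite {f \<in> E. u \<in> f}" using finE by simp
  qed
  thus ?thesis using deg[OF uv(3)] card_insert_disjoint[OF finN[OF e] vN] by simp
qed

lemma count_lb:
  assumes e: "e \<in> E"
  shows "card (N e) * card {\<sigma>. \<sigma> permutes {1..n}}
    \<le> card {\<sigma>\<in>{\<sigma>. \<sigma> permutes {1..n}}. \<exists>w. \<forall>x\<in>e. {x,w} \<in> E \<and> \<sigma> w < \<sigma> x} * (card (N e) + 2)"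
proof -
  define S where "S = N e \<union> e"
  define A where "A w = {\<sigma>. \<sigma> permutes {1..n} \<and> (\<forall>z\<in>S. z \<noteq> w \<longrightarrow> \<sigma> w < \<sigma> z)}" for w
  define T where "T = {\<sigma>\<in>{\<sigma>. \<sigma> permutes {1..n}}. \<exists>w. \<forall>x\<in>e. {x,w} \<in> E \<and> \<sigma> w < \<sigma> x}"
  have S_sub: "S \<subseteq> {1..n}" unfolding S_def using N_sub[OF e] Eel[OF e] by blast
  have fe: "finite e" using card2[OF e] by (metis card.infinite zero_neq_numeral)
  have disj: "N e \<inter> e = {}" using N_disj by blast
  have "card S = card (N e) + card e" unfolding S_def by (rule card_Un_disjoint[OF finN[OF e] fe disj])
  hence cS: "card S = card (N e) + 2" using card2[OF e] by simp
  have cA: "card (A w) * (card (N e) + 2) = card {\<sigma>. \<sigma> permutes {1..n}}" if "w \<in> N e" for w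
  proof -
    have wS: "w \<in> S" using that S_def by blast
    have "card (A w) * card S = card {\<sigma>. \<sigma> permutes {1..n}}" unfolding A_def by (rule argm_card[OF S_sub wS])
    thus ?thesis using cS by simp
  qed
  have finT: "finite T" unfolding T_def by (rule finite_subset[OF _ finP]) blast
  have sub: "(\<Union>w\<in>N e. A w) \<subseteq> T"
  proof
    fix \<sigma> assume "\<sigma> \<in> (\<Union>w\<in>N e. A w)"
    then obtain w where w: "w \<in> N e" "\<sigma> \<in> A w" by blast
    have "\<forall>x\<in>e. {x,w} \<in> E \<and> \<sigma> w < \<sigma> x"
    proof
      fix x assume x: "x \<in> e"
      have "x \<noteq> w" using x N_disj[OF w(1)] by blast
      moreover have "x \<in> S" using x S_def by blast
      ultimately have "\<sigma> w < \<sigma> x" using w(2) unfolding A_def by blast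
      moreover have "{x,w} \<in> E" using w(1) x unfolding N_def by blast
      ultimately show "{x,w} \<in> E \<and> \<sigma> w < \<sigma> x" by blast
    qed
    moreover have "\<sigma> permutes {1..n}" using w(2) unfolding A_def by blast
    ultimately show "\<sigma> \<in> T" unfolding T_def by blast
  qed
  have "card (\<Union>w\<in>N e. A w) = (\<Sum>w\<in>N e. card (A w))"
  proof (rule card_UN_disjoint[OF finN[OF e]])
    show "\<forall>i\<in>N e. finite (A i)"
    proof
      fix i assume "i \<in> N e"
      hence "A i \<subseteq> T" using sub by blast
      thus "finite (A i)" using finT by (rule finite_subset)
    qed
    show "\<forall>i\<in>N e. \<forall>j\<in>N e. i \<noteq> j \<longrightarrow> A i \<inter> A j = {}"
    proof (intro ballI impI)
      fix i j assume ij: "i \<in> N e" "j \<in> N e" "i \<noteq> j"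
      have iS: "i \<in> S" "j \<in> S" using ij S_def by blast+
      show "A i \<inter> A j = {}"
      proof (rule ccontr)
        assume "A i \<inter> A j \<noteq> {}"
        then obtain \<sigma> where "\<sigma> \<in> A i" "\<sigma> \<in> A j" by blast
        hence a1: "\<forall>z\<in>S. z \<noteq> i \<longrightarrow> \<sigma> i < \<sigma> z" and a2: "\<forall>z\<in>S. z \<noteq> j \<longrightarrow> \<sigma> j < \<sigma> z"
          unfolding A_def by simp_all
        have "\<sigma> i < \<sigma> j" using a1 iS(2) ij(3)[symmetric] by blast
        moreover have "\<sigma> j < \<sigma> i" using a2 iS(1) ij(3) by blast
        ultimately show False by simp
      qed
    qed
  qed
  hence "(\<Sum>w\<in>N e. card (A w)) \<le> card T" using card_mono[OF finT sub] by simp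
  hence "(\<Sum>w\<in>N e. card (A w)) * (card (N e) + 2) \<le> card T * (card (N e) + 2)" by (rule mult_right_mono) simp
  moreover have "(\<Sum>w\<in>N e. card (A w)) * (card (N e) + 2) = (\<Sum>w\<in>N e. card (A w) * (card (N e) + 2))"
    by (rule sum_distrib_right)
  moreover have "\<dots> = (\<Sum>w\<in>N e. card {\<sigma>. \<sigma> permutes {1..n}})"
    by (rule sum.cong[OF refl cA])
  moreover have "(\<Sum>w\<in>N e. card {\<sigma>. \<sigma> permutes {1..n}}) = card (N e) * card {\<sigma>. \<sigma> permutes {1..n}}"
    by simp
  ultimately have "card (N e) * card {\<sigma>. \<sigma> permutes {1..n}} \<le> card T * (card (N e) + 2)" by simp
  thus ?thesis unfolding T_def .
qed

lemma tri_sum: "(\<Sum>e\<in>E. card (N e)) = 3 * card (triangles n G)"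
proof -
  define Tr where "Tr = triangles n G"
  define B where "B T = {e. e \<subseteq> T \<and> card e = 2}" for T :: "nat set"
  have finTr: "finite Tr"
  proof (rule finite_subset[of _ "Pow {1..n}"])
    show "Tr \<subseteq> Pow {1..n}" unfolding Tr_def triangles_def by blast
  qed simp
  have Tr3: "card T = 3" "finite T" if "T \<in> Tr" for T
  proof -
    show "card T = 3" using that unfolding Tr_def triangles_def by blast
    thus "finite T" by (metis card.infinite zero_neq_numeral)
  qed
  have finB: "finite (B T)" if "T \<in> Tr" for T
  proof (rule finite_subset[of _ "Pow T"])
    show "B T \<subseteq> Pow T" unfolding B_def by blast
    show "finite (Pow T)" using Tr3(2)[OF that] by simp
  qed
  have cB: "card (B T) = 3" if "T \<in> Tr" for T
    unfolding B_def using n_subsets[OF Tr3(2)[OF that], of 2] Tr3(1)[OF that] by (simp add: numeral_eq_Suc)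
  have "(\<Sum>e\<in>E. card (N e)) = card (SIGMA e:E. N e)"
    by (rule card_SigmaI[symmetric]) (use finE finN in auto)
  also have "\<dots> = card ((\<lambda>(e,w). (insert w e, e)) ` (SIGMA e:E. N e))"
  proof (rule card_image[symmetric], rule inj_onI)
    fix p q assume p: "p \<in> (SIGMA e:E. N e)" and q: "q \<in> (SIGMA e:E. N e)"
      and eq: "(\<lambda>(e,w). (insert w e, e)) p = (\<lambda>(e,w). (insert w e, e)) q"
    obtain e w where pe: "p = (e,w)" "w \<in> N e" using p by (cases p) simp
    obtain e' w' where qe: "q = (e',w')" "w' \<in> N e'" using q by (cases q) simp
    have "(insert w e, e) = (insert w' e', e')" using eq unfolding pe qe by (simp only: prod.case)
    hence ee: "e = e'" "insert w e = insert w' e" by (metis prod.inject)+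
    have "w \<notin> e" using N_disj pe(2) by blast
    moreover have "w' \<notin> e" using N_disj qe(2) ee(1) by blast
    ultimately have "w = w'" using ee(2) by (metis insertE insertI1)
    thus "p = q" using pe qe ee by simp
  qed
  also have "(\<lambda>(e,w). (insert w e, e)) ` (SIGMA e:E. N e) = (SIGMA T:Tr. B T)"
  proof
    show "(\<lambda>(e,w). (insert w e, e)) ` (SIGMA e:E. N e) \<subseteq> (SIGMA T:Tr. B T)"
    proof
      fix p assume "p \<in> (\<lambda>(e,w). (insert w e, e)) ` (SIGMA e:E. N e)"
      then obtain q where q: "q \<in> (SIGMA e:E. N e)" "p = (\<lambda>(e,w). (insert w e, e)) q" by blast
      then obtain e w where ew: "e \<in> E" "w \<in> N e" "p = (insert w e, e)"
        by (cases q) (simp only: prod.case mem_Sigma_iff, blast)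
      obtain u v where uv: "e = {u,v}" "u \<noteq> v" "u \<in> {1..n}" "v \<in> {1..n}" using Eedge[OF ew(1)] by blast
      have wn: "w \<notin> e" using N_disj ew by blast
      have w1: "w \<in> {1..n}" using N_sub[OF ew(1)] ew by blast
      have ax: "\<forall>x\<in>e. {x,w} \<in> E" using ew(2) unfolding N_def by blast
      have uw: "{u,w} \<in> E" "{v,w} \<in> E" using ax uv(1) by blast+
      have "insert w e \<in> Tr"
        unfolding Tr_def triangles_def
      proof (intro CollectI conjI ballI impI)
        show "insert w e \<subseteq> {1..n}" using uv w1 by blast
        have "w \<noteq> u" "w \<noteq> v" using wn uv(1) by blast+
        thus "card (insert w e) = 3" using uv(1,2) by simp
        fix x y assume "x \<in> insert w e" "y \<in> insert w e" "x \<noteq> y"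
        have all: "{u,v} \<in> E" "{v,u} \<in> E" "{u,w} \<in> E" "{w,u} \<in> E" "{v,w} \<in> E" "{w,v} \<in> E"
          using uv(1) uw ew(1) insert_commute[of u v] insert_commute[of w u] insert_commute[of w v] by metis+
        from \<open>x \<in> insert w e\<close> \<open>y \<in> insert w e\<close> \<open>x \<noteq> y\<close> uv(1)
        consider "x = w" "y = u" | "x = w" "y = v" | "x = u" "y = w" | "x = u" "y = v" | "x = v" "y = w" | "x = v" "y = u"
          by blast
        thus "{x,y} \<in> E" using all by cases simp_all
      qed
      moreover have "e \<in> B (insert w e)" unfolding B_def using card2[OF ew(1)] by blast
      ultimately show "p \<in> (SIGMA T:Tr. B T)" using ew(3) by blast
    qed
  next
    show "(SIGMA T:Tr. B T) \<subseteq> (\<lambda>(e,w). (insert w e, e)) ` (SIGMA e:E. N e)"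
    proof
      fix p assume "p \<in> (SIGMA T:Tr. B T)"
      obtain T e where pT: "p = (T,e)" by (cases p)
      have Te: "T \<in> Tr" "e \<in> B T" "p = (T,e)" using \<open>p \<in> (SIGMA T:Tr. B T)\<close> pT by simp_all
      have eT: "e \<subseteq> T" "card e = 2" using Te(2) unfolding B_def by simp_all
      have Tp: "\<forall>u\<in>T. \<forall>v\<in>T. u \<noteq> v \<longrightarrow> {u, v} \<in> E" using Te(1) unfolding Tr_def triangles_def by blast
      have fe: "finite e" using eT(2) by (metis card.infinite zero_neq_numeral)
      have "card (T - e) = 1" using card_Diff_subset[OF fe eT(1)] eT(2) Tr3[OF Te(1)] by simp
      then obtain w where w: "T - e = {w}" by (rule card_1_singletonE)
      have Tw: "T = insert w e" using w eT(1) by (metis Diff_partition insert_is_Un sup_commute)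
      have wn: "w \<notin> e" using w by blast
      obtain a b where ab: "e = {a,b}" "a \<noteq> b" using eT(2)[unfolded card_2_iff] by blast
      have "a \<in> T" "b \<in> T" using ab(1) eT(1) by blast+
      hence "{a,b} \<in> E" using Tp ab(2) by blast
      hence eE: "e \<in> E" using ab(1) by simp
      have wN: "w \<in> N e" unfolding N_def
      proof (intro CollectI ballI)
        fix x assume x: "x \<in> e"
        have "x \<in> T" "w \<in> T" "x \<noteq> w" using x Tw wn by blast+
        thus "{x,w} \<in> E" using Tp by blast
      qed
      have "p = (\<lambda>(e,w). (insert w e, e)) (e,w)" using Tw Te(3) by (simp only: prod.case)
      moreover have "(e,w) \<in> (SIGMA e:E. N e)" using eE wN by blast
      ultimately show "p \<in> (\<lambda>(e,w). (insert w e, e)) ` (SIGMA e:E. N e)" by (rule image_eqI)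
    qed
  qed
  also have "card (SIGMA T:Tr. B T) = (\<Sum>T\<in>Tr. card (B T))" using finTr finB by simp
  also have "\<dots> = (\<Sum>T\<in>Tr. 3)" by (rule sum.cong[OF refl cB])
  finally show ?thesis unfolding Tr_def by simp
qed

end


context gs begin

abbreviation "P \<equiv> {\<sigma>. \<sigma> permutes {1..n}}"

lemma P_ne: "P \<noteq> {}" using permutes_id by blast

lemma choose2: "2 * real (d choose 2) = real d * (real d - 1)"
proof -
  have "2 * (d choose 2) = d * (d - 1)"
  proof -
    have "even (d * (d - 1))" by (cases "even d") auto
    thus ?thesis unfolding choose_two by simp
  qed
  hence "2 * real (d choose 2) = real d * real (d - 1)" by (metis of_nat_mult of_nat_numeral)
  also have "\<dots> = real d * (real d - 1)" by (cases d) auto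
  finally show ?thesis .
qed

theorem main:
  "measure_pmf.expectation (pmf_of_set P) (\<lambda>\<sigma>. real (phi_norm n d (relabel \<sigma> G)))
     \<ge> c * (real d * real n / 2) * ((real d - 1) / (real d + 1))"
proof -
  define Q where "Q \<sigma> e \<longleftrightarrow> (\<exists>w. \<forall>x\<in>e. {x,w} \<in> E \<and> \<sigma> w < \<sigma> x)" for \<sigma> :: "nat \<Rightarrow> nat" and e
  have finP': "finite P" using finP .
  have cP: "real (card P) > 0" using finP' P_ne by (simp add: card_gt_0_iff)
  have "measure_pmf.expectation (pmf_of_set P) (\<lambda>\<sigma>. real (phi_norm n d (relabel \<sigma> G)))
      = (\<Sum>\<sigma>\<in>P. real (phi_norm n d (relabel \<sigma> G))) / real (card P)"
    by (rule integral_pmf_of_set[OF P_ne finP'])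
  also have "(\<Sum>\<sigma>\<in>P. real (phi_norm n d (relabel \<sigma> G))) = real (\<Sum>\<sigma>\<in>P. card {e\<in>E. Q \<sigma> e})"
    unfolding of_nat_sum Q_def by (rule sum.cong[OF refl]) (simp add: phi_norm_eq)
  also have "(\<Sum>\<sigma>\<in>P. card {e\<in>E. Q \<sigma> e}) = (\<Sum>e\<in>E. card {\<sigma>\<in>P. Q \<sigma> e})"
    by (rule sum_swap_card[OF finP' finE])
  finally have ex: "measure_pmf.expectation (pmf_of_set P) (\<lambda>\<sigma>. real (phi_norm n d (relabel \<sigma> G)))
      = (\<Sum>e\<in>E. real (card {\<sigma>\<in>P. Q \<sigma> e})) / real (card P)" by simp
  have lb: "real (card (N e)) * real (card P) / (real d + 1) \<le> real (card {\<sigma>\<in>P. Q \<sigma> e})"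
    if e: "e \<in> E" for e
  proof -
    have h1: "real (card (N e)) * real (card P) \<le> real (card {\<sigma>\<in>P. Q \<sigma> e}) * (real (card (N e)) + 2)"
      using count_lb[OF e] unfolding Q_def
      by (metis (no_types, lifting) of_nat_add of_nat_le_iff of_nat_mult of_nat_numeral)
    have h2: "real (card (N e)) + 2 \<le> real d + 1" using Ncard[OF e] by linarith
    have "real (card (N e)) * real (card P) / (real d + 1)
        \<le> real (card (N e)) * real (card P) / (real (card (N e)) + 2)"
      by (rule divide_left_mono) (use h2 in auto)
    also have "\<dots> \<le> real (card {\<sigma>\<in>P. Q \<sigma> e})" using h1 by (simp add: divide_le_eq)
    finally show ?thesis .
  qed
  have "(\<Sum>e\<in>E. real (card (N e)) * real (card P) / (real d + 1)) \<le> (\<Sum>e\<in>E. real (card {\<sigma>\<in>P. Q \<sigma> e}))"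
    by (rule sum_mono) (rule lb)
  moreover have "(\<Sum>e\<in>E. real (card (N e)) * real (card P) / (real d + 1))
      = real (\<Sum>e\<in>E. card (N e)) * real (card P) / (real d + 1)"
    by (simp add: sum_divide_distrib[symmetric] sum_distrib_right[symmetric])
  ultimately have "real (3 * card (triangles n G)) * real (card P) / (real d + 1) \<le> (\<Sum>e\<in>E. real (card {\<sigma>\<in>P. Q \<sigma> e}))"
    unfolding tri_sum by simp
  hence "real (3 * card (triangles n G)) / (real d + 1) \<le> (\<Sum>e\<in>E. real (card {\<sigma>\<in>P. Q \<sigma> e})) / real (card P)"
    using cP by (simp add: le_divide_eq)
  moreover have "c * (real d * real n / 2) * ((real d - 1) / (real d + 1)) \<le> real (3 * card (triangles n G)) / (real d + 1)"
  proof -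
    have "c * (real d * real n / 2) * (real d - 1) = 3 * (c * T_max n d)"
    proof -
      have c2: "real (d choose 2) = real d * (real d - 1) / 2" using choose2 by simp
      show ?thesis unfolding T_max_def c2 by (simp add: field_simps)
    qed
    also have "\<dots> \<le> real (3 * card (triangles n G))" using tri_ge by simp
    finally have X: "c * (real d * real n / 2) * (real d - 1) \<le> real (3 * card (triangles n G))" .
    have "c * (real d * real n / 2) * ((real d - 1) / (real d + 1)) = (c * (real d * real n / 2) * (real d - 1)) / (real d + 1)"
      by simp
    also have "\<dots> \<le> real (3 * card (triangles n G)) / (real d + 1)"
      by (rule divide_right_mono[OF X]) simp
    finally show ?thesis .
  qed
  ultimately show ?thesis unfolding ex by linarith
qed

end

theorem lemma3:
  fixes n d :: nat and c :: real and G :: lgraph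
  assumes "0 < c" "c < 1" "even (d * n)"
    and "G \<in> Gstar d c n"
  shows "measure_pmf.expectation (pmf_of_set {\<sigma>. \<sigma> permutes {1..n}})
           (\<lambda>\<sigma>. real (phi_norm n d (relabel \<sigma> G)))
         \<ge> c * (real d * real n / 2) * ((real d - 1) / (real d + 1))"
proof -
  interpret gs n d c G by unfold_locales (rule assms(4))
  show ?thesis by (rule main)
qed

end
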